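(* Let $\gamma>1$, $j\in\{0,1,2\}$, $J(x)=\int_1^x r^{-j/2}\,dr$, and let $v:\mathbb R\to\mathbb R$ be $C^1$. Suppose $s$ and $\tau_-$ are $C^1$ functions on $[1,\infty)$ with $\tau_-(1)=0$, satisfying for all $x\ge1$ $$s'(x)=1-\frac{\gamma+1}{4}v(\tau_-(x))\,x^{-j/2},\qquad s(x)-\tau_-(x)=x-1-\frac{\gamma+1}{2}v(\tau_-(x))J(x).$$ Then for all $x\ge1$ $$\frac{\gamma+1}{4}v(\tau_-(x))^2J(x)=\int_0^{\tau_-(x)}v(s)\,ds.$$ Consequently, if $v(\tau_-(x))>0$ for large $x$ and $\int_0^{\tau_-(x)}v(s)\,ds\to b>0$ as $x\to\infty$, then the velocity jump $[u]=x^{-j/2}v(\tau_-(x))$ satisfies $$[u]\sim\Big(\frac{4b}{(\gamma+1)J(x)}\Big)^{1/2}x^{-j/2}\sim\Big(\frac{4b}{\gamma+1}\Big)^{1/2}\begin{cases}x^{-1/2},&j=0,\\ \tfrac{1}{\sqrt2}x^{-3/4},&j=1,\\ x^{-1}(\log x)^{-1/2},&j=2.\end{cases}$$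
   Context: Setting: leading-order modulated simple wave $u=v(\tau)x^{-j/2}$ on forward characteristics $t-\tau=x-1-\frac{\gamma+1}{2}v(\tau)J(x)$ (wavelets labelled by $\tau$, the time at which they leave $x=1$), with $v$ the boundary data $u(1,\tau)$. A weak shock $t=s(x)$ moves into gas at rest; $\tau_-(x)$ is the label of the wavelet immediately behind the shock at position $x$, and the first relation is the weak-shock speed law $1/U\approx1-\frac{\gamma+1}{4}[u]$. *)

theory Defs
  imports "HOL-Analysis.Analysis" "HOL-Library.Landau_Symbols"
begin

definition Jfun :: "nat \<Rightarrow> real \<Rightarrow> real" where
  "Jfun j x = integral {1..x} (\<lambda>r. r powr (- (real j / 2)))"

end

theory Submission imports Defs "HOL-Real_Asymp.Real_Asymp" begin

lemma part1_gen:
  fixes c X :: real and v v' s s' tau tau' J g :: "real \<Rightarrow> real"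
  assumes X: "1 < X"
    and vd: "\<And>y. (v has_real_derivative v' y) (at y)"
    and sd: "\<And>x. 1 \<le> x \<Longrightarrow> x \<le> X \<Longrightarrow> (s has_real_derivative s' x) (at x within {1..X})"
    and td: "\<And>x. 1 \<le> x \<Longrightarrow> x \<le> X \<Longrightarrow> (tau has_real_derivative tau' x) (at x within {1..X})"
    and Jd: "\<And>x. 1 \<le> x \<Longrightarrow> x \<le> X \<Longrightarrow> (J has_real_derivative g x) (at x within {1..X})"
    and J1: "J 1 = 0" and tau1: "tau 1 = 0"
    and sp: "\<And>x. 1 \<le> x \<Longrightarrow> x \<le> X \<Longrightarrow> s' x = 1 - c/4 * v (tau x) * g x"
    and ch: "\<And>x. 1 \<le> x \<Longrightarrow> x \<le> X \<Longrightarrow> s x - tau x = x - 1 - c/2 * v (tau x) * J x"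
  shows "c/4 * (v (tau X))\<^sup>2 * J X = (LBINT t=ereal 0..ereal (tau X). v t)"
proof -
  have vcont: "continuous_on UNIV v"
    using vd by (meson DERIV_isCont continuous_at_imp_continuous_on)
  have tcont: "continuous_on {1..X} tau"
    using td by (meson DERIV_continuous atLeastAtMost_iff continuous_on_eq_continuous_within)
  have "compact (tau ` {1..X})" by (rule compact_continuous_image[OF tcont compact_Icc])
  then obtain M where M: "\<And>x. x \<in> {1..X} \<Longrightarrow> \<bar>tau x\<bar> \<le> M"
    using compact_imp_bounded bounded_real by (metis imageI)
  have M0: "0 \<le> M" using M[of 1] X by auto
  define F where "F y = integral {-M..y} v" for y
  have Fd: "(F has_real_derivative v y) (at y within {-M..M})" if "y \<in> {-M..M}" for y
    unfolding F_def[abs_def]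
    by (rule integral_has_real_derivative[OF continuous_on_subset[OF vcont] that]) auto
  have Lb: "(LBINT t=ereal 0..ereal (tau x). v t) = F (tau x) - F 0" if x: "x \<in> {1..X}" for x
  proof (rule interval_integral_FTC_finite)
    show "continuous_on {min 0 (tau x)..max 0 (tau x)} v"
      using continuous_on_subset[OF vcont] by auto
    fix y assume y: "min 0 (tau x) \<le> y" "y \<le> max 0 (tau x)"
    have "y \<in> {-M..M}" using y M[OF x] M0 by auto
    moreover have "{min 0 (tau x)..max 0 (tau x)} \<subseteq> {-M..M}" using M[OF x] M0 by auto
    ultimately show "(F has_vector_derivative v y) (at y within {min 0 (tau x)..max 0 (tau x)})"
      using Fd has_real_derivative_iff_has_vector_derivative DERIV_subset by metis
  qed
  define H where "H y = c/4 * (v (tau y))\<^sup>2 * J y - (F (tau y) - F 0)" for y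
  have Hd: "(H has_real_derivative 0) (at x within {1..X})" if x: "x \<in> {1..X}" for x
  proof -
    have x1: "1 \<le> x" "x \<le> X" using x by auto
    have vt: "((\<lambda>x. v (tau x)) has_real_derivative v' (tau x) * tau' x) (at x within {1..X})"
      by (rule DERIV_chain2[OF vd td[OF x1]])
    have Ft: "((\<lambda>x. F (tau x)) has_real_derivative v (tau x) * tau' x) (at x within {1..X})"
    proof -
      have "(F has_real_derivative v (tau x)) (at (tau x) within tau ` {1..X})"
        by (rule DERIV_subset[OF Fd]) (use M M0 x in force)+
      from DERIV_image_chain[OF this td[OF x1]] show ?thesis by (simp add: o_def)
    qed
    define D1 where "D1 = 1 - c/2 * (v' (tau x) * tau' x * J x + v (tau x) * g x)"
    have R: "((\<lambda>x. x - 1 - c/2 * v (tau x) * J x) has_real_derivative D1) (at x within {1..X})"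
      unfolding D1_def by (auto intro!: derivative_eq_intros vt Jd x1 simp: algebra_simps)
    have L: "((\<lambda>x. s x - tau x) has_real_derivative D1) (at x within {1..X})"
      by (rule has_field_derivative_transform_within[OF R zero_less_one x]) (use ch in auto)
    have L2: "((\<lambda>x. s x - tau x) has_real_derivative s' x - tau' x) (at x within {1..X})"
      by (auto intro!: derivative_eq_intros sd td x1)
    have "s' x - tau' x = D1"
      using vector_derivative_unique_within_closed_interval[of 1 X x "\<lambda>x. s x - tau x"]
        L L2 X x unfolding has_real_derivative_iff_has_vector_derivative cbox_interval by blast
    hence rel: "tau' x = c/4 * v (tau x) * g x + c/2 * v' (tau x) * tau' x * J x"
      using sp[OF x1] unfolding D1_def by (simp add: algebra_simps)
    have "(H has_real_derivative c/4 * (2 * v (tau x) * (v' (tau x) * tau' x) * J x + (v (tau x))\<^sup>2 * g x) - v (tau x) * tau' x) (at x within {1..X})"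
      unfolding H_def[abs_def] by (auto intro!: derivative_eq_intros vt Jd Ft x1 simp: algebra_simps power2_eq_square)
    moreover have "c/4 * (2 * v (tau x) * (v' (tau x) * tau' x) * J x + (v (tau x))\<^sup>2 * g x) - v (tau x) * tau' x = 0"
    proof -
      have "v (tau x) * tau' x = v (tau x) * (c/4 * v (tau x) * g x + c/2 * v' (tau x) * tau' x * J x)"
        using rel by simp
      thus ?thesis by (simp add: algebra_simps power2_eq_square)
    qed
    ultimately show ?thesis by simp
  qed
  obtain C where C: "\<And>y. y \<in> {1..X} \<Longrightarrow> H y = C"
    using has_field_derivative_zero_constant[OF convex_real_interval(5) Hd] by blast
  have "H 1 = 0" unfolding H_def by (simp add: J1 tau1)
  hence "H X = 0" using C[of 1] C[of X] X by auto
  thus ?thesis using Lb[of X] X unfolding H_def by simp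
qed

lemma Jfun_explicit:
  assumes "1 \<le> x" "j \<in> {0,1,2::nat}"
  shows "Jfun j x = (if j = 0 then x - 1 else if j = 1 then 2 * sqrt x - 2 else ln x)"
proof -
  have FTC: "Jfun j x = f x - f 1"
    if "\<And>r. 1 \<le> r \<Longrightarrow> r \<le> x \<Longrightarrow> (f has_real_derivative r powr (- (real j / 2))) (at r within {1..x})" for f
    unfolding Jfun_def
    by (rule integral_unique, rule fundamental_theorem_of_calculus)
       (use assms that in \<open>auto simp: has_real_derivative_iff_has_vector_derivative[symmetric]\<close>)
  consider "j = 0" | "j = 1" | "j = 2" using assms by auto
  then show ?thesis
  proof cases
    case 1
    have "Jfun j x = x - 1"
      using FTC[of "\<lambda>r. r"] 1 by (auto intro!: derivative_eq_intros)
    then show ?thesis using 1 by simp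
  next
    case 2
    have "Jfun j x = 2 * sqrt x - 2 * sqrt 1"
    proof (rule FTC)
      fix r :: real assume r: "1 \<le> r" "r \<le> x"
      have "r powr (- (real j / 2)) = 2 * (inverse (sqrt r) / 2)"
        using 2 r by (simp add: powr_minus powr_half_sqrt)
      thus "((\<lambda>r. 2 * sqrt r) has_real_derivative r powr (- (real j / 2))) (at r within {1..x})"
        using r by (auto intro!: derivative_eq_intros)
    qed
    then show ?thesis using 2 by simp
  next
    case 3
    have "Jfun j x = ln x - ln 1"
    proof (rule FTC)
      fix r :: real assume r: "1 \<le> r" "r \<le> x"
      have "r powr (- (real j / 2)) = inverse r"
        using 3 r by (simp add: powr_minus)
      thus "(ln has_real_derivative r powr (- (real j / 2))) (at r within {1..x})"
        using r by (auto intro!: derivative_eq_intros simp: field_simps)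
    qed
    then show ?thesis using 3 by simp
  qed
qed

lemma asy0: "(\<lambda>x::real. 1 / sqrt (x - 1)) \<sim>[at_top] (\<lambda>x. x powr (-1/2))"
  by real_asymp
lemma asy1: "(\<lambda>x::real. x powr (-1/2) / sqrt (sqrt x - 1)) \<sim>[at_top] (\<lambda>x. x powr (-3/4))"
  by real_asymp
lemma asy2: "(\<lambda>x::real. x powr (-1) / sqrt (ln x)) \<sim>[at_top] (\<lambda>x. x powr (-1) * ln x powr (-1/2))"
  by real_asymp

lemma Jfun_pos: "1 < x \<Longrightarrow> j \<in> {0,1,2::nat} \<Longrightarrow> Jfun j x > 0"
  using Jfun_explicit[of x j] by (auto simp: ln_gt_zero)

lemma g_equiv:
  fixes K :: real
  assumes j: "j \<in> {0,1,2::nat}"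
  shows "(\<lambda>x. sqrt (K / Jfun j x) * x powr (- (real j / 2))) \<sim>[at_top]
         (\<lambda>x. sqrt K * (if j = 0 then x powr (- 1 / 2)
                  else if j = 1 then 1 / sqrt 2 * x powr (- 3 / 4)
                  else x powr (- 1) * ln x powr (- 1 / 2)))"
proof -
  have ev: "\<forall>\<^sub>F x in at_top. (x::real) > 1" by (rule eventually_gt_at_top)
  have sq: "sqrt (K / Jfun j x) = sqrt K / sqrt (Jfun j x)" for x
    by (simp add: real_sqrt_divide)
  consider "j = 0" | "j = 1" | "j = 2" using j by auto
  then show ?thesis
  proof cases
    case 1
    have "(\<lambda>x. sqrt K * (1 / sqrt (x - 1))) \<sim>[at_top] (\<lambda>x. sqrt K * x powr (-1/2))"
      by (rule asymp_equiv_mult[OF asymp_equiv_refl asy0])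
    moreover have "\<forall>\<^sub>F x in at_top. sqrt (K / Jfun j x) * x powr (- (real j / 2)) = sqrt K * (1 / sqrt (x - 1))"
      using ev by eventually_elim (use 1 in \<open>auto simp: sq Jfun_explicit real_sqrt_divide\<close>)
    ultimately show ?thesis using 1 by (subst asymp_equiv_cong[OF _ always_eventually]) auto
  next
    case 2
    have "(\<lambda>x. sqrt K * (1 / sqrt 2) * (x powr (-1/2) / sqrt (sqrt x - 1))) \<sim>[at_top] (\<lambda>x. sqrt K * (1 / sqrt 2) * x powr (-3/4))"
      by (rule asymp_equiv_mult[OF asymp_equiv_refl asy1])
    moreover have "\<forall>\<^sub>F x in at_top. sqrt (K / Jfun j x) * x powr (- (real j / 2)) = sqrt K * (1 / sqrt 2) * (x powr (-1/2) / sqrt (sqrt x - 1))"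
    using ev proof eventually_elim
      case (elim x)
      have "sqrt (2 * sqrt x - 2) = sqrt 2 * sqrt (sqrt x - 1)"
        by (simp add: real_sqrt_mult[symmetric] algebra_simps)
      then show ?case using 2 elim by (auto simp: Jfun_explicit real_sqrt_divide)
    qed
    ultimately show ?thesis using 2 by (subst asymp_equiv_cong[OF _ always_eventually]) (auto simp: mult.assoc)
  next
    case 3
    have "(\<lambda>x. sqrt K * (x powr (-1) / sqrt (ln x))) \<sim>[at_top] (\<lambda>x. sqrt K * (x powr (-1) * ln x powr (-1/2)))"
      by (rule asymp_equiv_mult[OF asymp_equiv_refl asy2])
    moreover have "\<forall>\<^sub>F x in at_top. sqrt (K / Jfun j x) * x powr (- (real j / 2)) = sqrt K * (x powr (-1) / sqrt (ln x))"
      using ev by eventually_elim (use 3 in \<open>auto simp: Jfun_explicit real_sqrt_divide\<close>)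
    ultimately show ?thesis using 3 by (subst asymp_equiv_cong[OF _ always_eventually]) auto
  qed
qed
theorem mainTheorem5:
  fixes \<gamma> b :: real and j :: nat
    and v s tau s' tau' :: "real \<Rightarrow> real"
  assumes gamma: "\<gamma> > 1"
    and j: "j \<in> {0, 1, 2}"
    and v_C1: "v C1_differentiable_on UNIV"
    and s_deriv: "\<And>x. x \<ge> 1 \<Longrightarrow> (s has_real_derivative s' x) (at x within {1..})"
    and s'_cont: "continuous_on {1..} s'"
    and tau_deriv: "\<And>x. x \<ge> 1 \<Longrightarrow> (tau has_real_derivative tau' x) (at x within {1..})"
    and tau'_cont: "continuous_on {1..} tau'"
    and tau1: "tau 1 = 0"
    and shock_speed: "\<And>x. x \<ge> 1 \<Longrightarrow>
        s' x = 1 - (\<gamma> + 1) / 4 * v (tau x) * x powr (- (real j / 2))"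
    and characteristic: "\<And>x. x \<ge> 1 \<Longrightarrow>
        s x - tau x = x - 1 - (\<gamma> + 1) / 2 * v (tau x) * Jfun j x"
  shows "(\<forall>x\<ge>1. (\<gamma> + 1) / 4 * (v (tau x))\<^sup>2 * Jfun j x
                   = (LBINT t = ereal 0..ereal (tau x). v t))
       \<and> (((\<forall>\<^sub>F x in at_top. v (tau x) > 0) \<and> b > 0 \<and>
            ((\<lambda>x. LBINT t = ereal 0..ereal (tau x). v t) \<longlongrightarrow> b) at_top)
          \<longrightarrow>
            (\<lambda>x. x powr (- (real j / 2)) * v (tau x)) \<sim>[at_top]
              (\<lambda>x. sqrt (4 * b / ((\<gamma> + 1) * Jfun j x)) * x powr (- (real j / 2)))
          \<and> (\<lambda>x. x powr (- (real j / 2)) * v (tau x)) \<sim>[at_top]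
              (\<lambda>x. sqrt (4 * b / (\<gamma> + 1)) *
                 (if j = 0 then x powr (- 1 / 2)
                  else if j = 1 then 1 / sqrt 2 * x powr (- 3 / 4)
                  else x powr (- 1) * ln x powr (- 1 / 2))))"
  proof -
  define c where "c = \<gamma> + 1"
  have c0: "c > 0" using gamma c_def by simp
  from v_C1 obtain v' where "\<forall>x\<in>UNIV. (v has_vector_derivative v' x) (at x)"
    unfolding C1_differentiable_on_def by blast
  hence vd: "\<And>y. (v has_real_derivative v' y) (at y)"
    by (simp add: has_real_derivative_iff_has_vector_derivative)
  have P1: "\<forall>x\<ge>1. (\<gamma> + 1) / 4 * (v (tau x))\<^sup>2 * Jfun j x
                   = (LBINT t = ereal 0..ereal (tau x). v t)"
  proof (intro allI impI)
    fix X :: real assume X: "1 \<le> X"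
    show "(\<gamma> + 1) / 4 * (v (tau X))\<^sup>2 * Jfun j X = (LBINT t = ereal 0..ereal (tau X). v t)"
    proof (cases "X = 1")
      case True then show ?thesis by (simp add: tau1 Jfun_def)
    next
      case False
      hence X1: "1 < X" using X by simp
      show ?thesis
      proof (rule part1_gen[OF X1 vd, where s=s and s'=s' and tau'=tau' and g="\<lambda>x. x powr (- (real j / 2))"])
        fix x assume x: "1 \<le> x" "x \<le> X"
        show "(s has_real_derivative s' x) (at x within {1..X})"
          by (rule DERIV_subset[OF s_deriv]) (use x in auto)
        show "(tau has_real_derivative tau' x) (at x within {1..X})"
          by (rule DERIV_subset[OF tau_deriv]) (use x in auto)
        show "(Jfun j has_real_derivative x powr (- (real j / 2))) (at x within {1..X})"
          unfolding Jfun_def[abs_def]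
          by (rule integral_has_real_derivative) (use x in \<open>auto intro!: continuous_intros\<close>)
        show "s' x = 1 - (\<gamma> + 1) / 4 * v (tau x) * x powr (- (real j / 2))"
          using shock_speed x by simp
        show "s x - tau x = x - 1 - (\<gamma> + 1) / 2 * v (tau x) * Jfun j x"
          using characteristic x by simp
      qed (auto simp: tau1 Jfun_def)
    qed
  qed
  moreover have "(\<lambda>x. x powr (- (real j / 2)) * v (tau x)) \<sim>[at_top]
              (\<lambda>x. sqrt (4 * b / ((\<gamma> + 1) * Jfun j x)) * x powr (- (real j / 2)))
          \<and> (\<lambda>x. x powr (- (real j / 2)) * v (tau x)) \<sim>[at_top]
              (\<lambda>x. sqrt (4 * b / (\<gamma> + 1)) *
                 (if j = 0 then x powr (- 1 / 2)
                  else if j = 1 then 1 / sqrt 2 * x powr (- 3 / 4)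
                  else x powr (- 1) * ln x powr (- 1 / 2)))"
    if ev: "\<forall>\<^sub>F x in at_top. v (tau x) > 0" and b: "b > 0"
      and lim: "((\<lambda>x. LBINT t = ereal 0..ereal (tau x). v t) \<longlongrightarrow> b) at_top"
  proof -
    define I where "I x = (LBINT t = ereal 0..ereal (tau x). v t)" for x
    have ev2: "\<forall>\<^sub>F x in at_top. x > 1 \<and> v (tau x) > 0"
      using ev eventually_gt_at_top[of 1] by eventually_elim auto
    have "\<forall>\<^sub>F x in at_top. x powr (- (real j / 2)) * v (tau x) /
          (sqrt (4 * b / ((\<gamma> + 1) * Jfun j x)) * x powr (- (real j / 2))) = sqrt (I x / b)"
    using ev2 proof eventually_elim
      case (elim x)
      have J: "Jfun j x > 0" using Jfun_pos[OF _ j] elim by simp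
      have vv: "(v (tau x))\<^sup>2 * (c * Jfun j x) = 4 * I x"
        using P1 elim unfolding I_def c_def by (auto simp: field_simps)
      have xp: "x powr (- (real j / 2)) \<noteq> 0" using elim by simp
      have "x powr (- (real j / 2)) * v (tau x) /
          (sqrt (4 * b / (c * Jfun j x)) * x powr (- (real j / 2)))
          = sqrt ((v (tau x))\<^sup>2) / sqrt (4 * b / (c * Jfun j x))"
        using xp elim by simp
      also have "\<dots> = sqrt ((v (tau x))\<^sup>2 / (4 * b / (c * Jfun j x)))"
        by (rule real_sqrt_divide[symmetric])
      also have "(v (tau x))\<^sup>2 / (4 * b / (c * Jfun j x)) = (v (tau x))\<^sup>2 * (c * Jfun j x) / (4 * b)"
        by simp
      also have "\<dots> = I x / b" using vv b by simp
      finally show ?case unfolding c_def .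
    qed
    moreover have "((\<lambda>x. sqrt (I x / b)) \<longlongrightarrow> 1) at_top"
    proof -
      have "((\<lambda>x. sqrt (I x / b)) \<longlongrightarrow> sqrt (b / b)) at_top"
        using lim b unfolding I_def by (intro tendsto_intros) auto
      thus ?thesis using b by simp
    qed
    ultimately have A: "(\<lambda>x. x powr (- (real j / 2)) * v (tau x)) \<sim>[at_top]
              (\<lambda>x. sqrt (4 * b / ((\<gamma> + 1) * Jfun j x)) * x powr (- (real j / 2)))"
      by (intro asymp_equivI') (rule tendsto_cong[THEN iffD2], assumption+)
    have B: "(\<lambda>x. sqrt (4 * b / ((\<gamma> + 1) * Jfun j x)) * x powr (- (real j / 2))) \<sim>[at_top]
              (\<lambda>x. sqrt (4 * b / (\<gamma> + 1)) *
                 (if j = 0 then x powr (- 1 / 2)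
                  else if j = 1 then 1 / sqrt 2 * x powr (- 3 / 4)
                  else x powr (- 1) * ln x powr (- 1 / 2)))"
      using g_equiv[OF j, of "4 * b / (\<gamma> + 1)"] by (simp add: field_simps)
    show ?thesis using A asymp_equiv_trans[OF A B] by blast
  qed
  ultimately show ?thesis by blast
qed

end
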